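(* Let $n\ge1$, and let $H_{2n}$ be the $(4n+1)$-dimensional Heisenberg group. Let $N=H_{2n}\times\mathbb R^3$, let $\Gamma$ be a cocompact lattice in $H_{2n}$, and let $\mathbb Z^3\subset\mathbb R^3$ be a lattice. Then the compact nilmanifold $N/(\Gamma\times\mathbb Z^3)$ admits an invariant HPKT structure.
   Context: The Heisenberg Lie algebra $\mathfrak h_{2n}$ has basis $X_1,\dots,X_{2n},Y_1,\dots,Y_{2n},Z$ with nonzero brackets $[X_j,Y_j]=Z$. $H_{2n}$ is the corresponding simply connected Lie group. An almost hyper-paracomplex structure on a manifold is a triple $(J_1,J_2,J_3)$ of endomorphisms of the tangent bundle with $J_1^2=J_2^2=\mathrm{id}$, $J_3^2=-\mathrm{id}$ and $J_1J_2=-J_2J_1=J_3$. It is hyper-paracomplex if each $J_a$ has vanishing Nijenhuis tensor. A metric $g$ is hyperparahermitian if $g(J_1X,J_1Y)=g(J_2X,J_2Y)=-g(J_3X,J_3Y)=-g(X,Y)$. An HPKT structure is a hyper-paracomplex structure together with a hyperparahermitian metric admitting a linear connection $\nabla$ with $\nabla g=\nabla J_a=0$ and totally skew-symmetric torsion. "Invariant" on a quotient of a Lie group by a discrete subgroup (acting by left translations) means induced by left-invariant structures. *)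

theory Defs
  imports "HOL-Analysis.Analysis"
begin

text \<open>Lie algebra of N = H_{2n} x R^3.  The index type 'n has n elements, so
  'n x bool has 2n elements; a vector is (x, y, z, w) = sum x_j X_j + sum y_j Y_j + z Z + w,
  with w in the abelian factor R^3.\<close>

type_synonym 'n hlie = "(real^('n \<times> bool)) \<times> (real^('n \<times> bool)) \<times> real \<times> (real^3)"

definition lie_br :: "'n::finite hlie \<Rightarrow> 'n hlie \<Rightarrow> 'n hlie" where
  "lie_br u v = (0, 0,
     (\<Sum>j\<in>UNIV. fst u $ j * fst (snd v) $ j - fst v $ j * fst (snd u) $ j), 0)"

definition nijenhuis :: "('n::finite hlie \<Rightarrow> 'n hlie) \<Rightarrow> 'n hlie \<Rightarrow> 'n hlie \<Rightarrow> 'n hlie" where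
  "nijenhuis J X Y = lie_br (J X) (J Y) - J (lie_br (J X) Y) - J (lie_br X (J Y)) + J (J (lie_br X Y))"

definition almost_hyper_paracomplex ::
  "('n::finite hlie \<Rightarrow> 'n hlie) \<Rightarrow> ('n hlie \<Rightarrow> 'n hlie) \<Rightarrow> ('n hlie \<Rightarrow> 'n hlie) \<Rightarrow> bool" where
  "almost_hyper_paracomplex J1 J2 J3 \<longleftrightarrow>
     linear J1 \<and> linear J2 \<and> linear J3 \<and>
     (\<forall>X. J1 (J1 X) = X) \<and> (\<forall>X. J2 (J2 X) = X) \<and> (\<forall>X. J3 (J3 X) = - X) \<and>
     (\<forall>X. J1 (J2 X) = J3 X) \<and> (\<forall>X. J2 (J1 X) = - J3 X)"

definition hyper_paracomplex ::
  "('n::finite hlie \<Rightarrow> 'n hlie) \<Rightarrow> ('n hlie \<Rightarrow> 'n hlie) \<Rightarrow> ('n hlie \<Rightarrow> 'n hlie) \<Rightarrow> bool" where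
  "hyper_paracomplex J1 J2 J3 \<longleftrightarrow> almost_hyper_paracomplex J1 J2 J3 \<and>
     (\<forall>X Y. nijenhuis J1 X Y = 0) \<and> (\<forall>X Y. nijenhuis J2 X Y = 0) \<and> (\<forall>X Y. nijenhuis J3 X Y = 0)"

definition metric :: "('n::finite hlie \<Rightarrow> 'n hlie \<Rightarrow> real) \<Rightarrow> bool" where
  "metric g \<longleftrightarrow> bilinear g \<and> (\<forall>X Y. g X Y = g Y X) \<and> (\<forall>X. (\<forall>Y. g X Y = 0) \<longrightarrow> X = 0)"

definition hyperparahermitian ::
  "('n::finite hlie \<Rightarrow> 'n hlie \<Rightarrow> real) \<Rightarrow> ('n hlie \<Rightarrow> 'n hlie) \<Rightarrow> ('n hlie \<Rightarrow> 'n hlie) \<Rightarrow> ('n hlie \<Rightarrow> 'n hlie) \<Rightarrow> bool" where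
  "hyperparahermitian g J1 J2 J3 \<longleftrightarrow> metric g \<and>
     (\<forall>X Y. g (J1 X) (J1 Y) = - g X Y) \<and> (\<forall>X Y. g (J2 X) (J2 Y) = - g X Y) \<and>
     (\<forall>X Y. - g (J3 X) (J3 Y) = - g X Y)"

text \<open>Torsion of a left-invariant connection, given by nabla X Y = \<nabla>_X Y on left-invariant fields.\<close>
definition torsion :: "('n::finite hlie \<Rightarrow> 'n hlie \<Rightarrow> 'n hlie) \<Rightarrow> 'n hlie \<Rightarrow> 'n hlie \<Rightarrow> 'n hlie" where
  "torsion nabla X Y = nabla X Y - nabla Y X - lie_br X Y"

definition HPKT ::
  "('n::finite hlie \<Rightarrow> 'n hlie) \<Rightarrow> ('n hlie \<Rightarrow> 'n hlie) \<Rightarrow> ('n hlie \<Rightarrow> 'n hlie) \<Rightarrow>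
   ('n hlie \<Rightarrow> 'n hlie \<Rightarrow> real) \<Rightarrow> bool" where
  "HPKT J1 J2 J3 g \<longleftrightarrow> hyper_paracomplex J1 J2 J3 \<and> hyperparahermitian g J1 J2 J3 \<and>
     (\<exists>nabla. bilinear nabla \<and>
        (\<forall>X Y Z. g (nabla X Y) Z + g Y (nabla X Z) = 0) \<and>
        (\<forall>X Y. nabla X (J1 Y) = J1 (nabla X Y)) \<and>
        (\<forall>X Y. nabla X (J2 Y) = J2 (nabla X Y)) \<and>
        (\<forall>X Y. nabla X (J3 Y) = J3 (nabla X Y)) \<and>
        (\<forall>X Y Z. g (torsion nabla X Y) Z = - g (torsion nabla X Z) Y))"

end

theory Submission
  imports Defs
begin

definition sw :: "'n \<times> bool \<Rightarrow> 'n \<times> bool" where "sw j = (fst j, \<not> snd j)"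
definition sg :: "'n \<times> bool \<Rightarrow> real" where "sg j = (if snd j then 1 else -1)"
definition tau :: "real^('n::finite \<times> bool) \<Rightarrow> real^('n \<times> bool)" where
  "tau a = (\<chi> j. sg j * a $ sw j)"

lemma sw_sw[simp]: "sw (sw j) = j" by (simp add: sw_def)
lemma sg_sw[simp]: "sg (sw j) = - sg j" by (simp add: sw_def sg_def)
lemma sg_sq[simp]: "sg j * sg j = 1" by (simp add: sg_def)
lemma sg_nz[simp]: "sg j \<noteq> 0" by (simp add: sg_def)

lemma sum_sw: "(\<Sum>j\<in>UNIV. f (sw j)) = (\<Sum>j\<in>UNIV. f j)"
proof -
  have inj: "inj sw" by (metis injI sw_sw)
  have surj: "range sw = UNIV" by (metis surj_def sw_sw)
  show ?thesis using sum.reindex[OF inj, of f] by (simp add: o_def surj)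
qed

lemma tau_add[simp]: "tau (a + b) = tau a + tau b"
  by (simp add: tau_def vec_eq_iff algebra_simps)
lemma tau_scale[simp]: "tau (c *\<^sub>R a) = c *\<^sub>R tau a"
  by (simp add: tau_def vec_eq_iff algebra_simps)
lemma tau_neg[simp]: "tau (- a) = - tau a"
  by (simp add: tau_def vec_eq_iff algebra_simps)
lemma tau_diff[simp]: "tau (a - b) = tau a - tau b"
  by (simp add: tau_def vec_eq_iff algebra_simps)
lemma tau_zero[simp]: "tau 0 = 0"
  by (simp add: tau_def vec_eq_iff)
lemma tau_tau[simp]: "tau (tau a) = - a"
  by (simp add: tau_def vec_eq_iff mult.assoc[symmetric])

lemma tau_skew: "a \<bullet> tau b = - (tau a \<bullet> b)"
proof -
  have "a \<bullet> tau b = (\<Sum>j\<in>UNIV. a $ j * (sg j * b $ sw j))"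
    by (simp add: inner_vec_def tau_def)
  also have "\<dots> = (\<Sum>j\<in>UNIV. a $ sw j * (sg (sw j) * b $ j))"
    using sum_sw[of "\<lambda>j. a $ j * (sg j * b $ sw j)"] by simp
  also have "\<dots> = - (\<Sum>j\<in>UNIV. (sg j * a $ sw j) * b $ j)"
    by (simp add: sum_negf[symmetric] algebra_simps)
  also have "\<dots> = - (tau a \<bullet> b)" by (simp add: inner_vec_def tau_def)
  finally show ?thesis .
qed

lemma tau_inner[simp]: "tau a \<bullet> tau b = a \<bullet> b"
  using tau_skew[of "tau a" b] by simp

lemma tau_swap: "a \<bullet> tau b = - (b \<bullet> tau a)"
  using tau_skew[of a b] tau_skew[of b a] by (simp add: inner_commute)

lemma lie_br_eq[simp]: "lie_br (x, y, z, w) (x', y', z', w') = (0, 0, x \<bullet> y' - x' \<bullet> y, 0)"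
  by (simp add: lie_br_def inner_vec_def sum_subtractf)

definition J1 :: "'n::finite hlie \<Rightarrow> 'n hlie" where
  "J1 = (\<lambda>(x, y, z, w). (x, - y, z, \<chi> i. if i = 2 then w $ i else - w $ i))"
definition J2 :: "'n::finite hlie \<Rightarrow> 'n hlie" where
  "J2 = (\<lambda>(x, y, z, w). (y, x, w $ 1, \<chi> i. if i = 1 then z else if i = 2 then w $ 3 else w $ 2))"
definition J3 :: "'n::finite hlie \<Rightarrow> 'n hlie" where
  "J3 = (\<lambda>(x, y, z, w). (y, - x, w $ 1, \<chi> i. if i = 1 then - z else if i = 2 then w $ 3 else - w $ 2))"
definition gg :: "'n::finite hlie \<Rightarrow> 'n hlie \<Rightarrow> real" where
  "gg = (\<lambda>(x, y, z, w) (x', y', z', w'). x \<bullet> tau y' + x' \<bullet> tau y + z * w' $ 3 + z' * w $ 3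
          - w $ 1 * w' $ 2 - w' $ 1 * w $ 2)"
definition LL :: "'n::finite hlie \<Rightarrow> 'n hlie" where
  "LL = (\<lambda>(x, y, z, w). (- tau x, - tau y, 0, 0))"
definition nab :: "'n::finite hlie \<Rightarrow> 'n hlie \<Rightarrow> 'n hlie" where
  "nab = (\<lambda>(x, y, z, w) V. (w $ 3) *\<^sub>R LL V)"

lemmas defs = J1_def J2_def J3_def gg_def LL_def nab_def

lemma ex3: "(v::real^3) = 0 \<longleftrightarrow> v $ 1 = 0 \<and> v $ 2 = 0 \<and> v $ 3 = 0"
  by (simp add: vec_eq_iff forall_3)

lemma ahp: "almost_hyper_paracomplex (J1::'n::finite hlie \<Rightarrow> _) J2 J3"
  unfolding almost_hyper_paracomplex_def
  by (auto intro!: linearI simp: defs split_paired_all vec_eq_iff forall_3 algebra_simps)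

lemma hpc: "hyper_paracomplex (J1::'n::finite hlie \<Rightarrow> _) J2 J3"
  unfolding hyper_paracomplex_def nijenhuis_def
  using ahp by (auto simp: defs split_paired_all vec_eq_iff forall_3 algebra_simps inner_commute
     inner_diff_left inner_diff_right)

lemma metric_gg: "metric (gg::'n::finite hlie \<Rightarrow> _)"
  unfolding metric_def bilinear_def
proof (intro conjI allI impI)
  show "linear (gg x)" for x :: "'n hlie"
    by (cases x) (auto intro!: linearI simp: defs split_paired_all inner_add_right inner_add_left algebra_simps)
  show "linear (\<lambda>x. gg x y)" for y :: "'n hlie"
    by (cases y) (auto intro!: linearI simp: defs split_paired_all inner_add_right inner_add_left algebra_simps)
  show "gg x y = gg y x" for x y :: "'n hlie"
    by (cases x, cases y) (auto simp: defs algebra_simps)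
next
  fix X :: "'n hlie" assume H: "\<forall>Y. gg X Y = 0"
  obtain x y z w where X: "X = (x, y, z, w)" by (cases X) auto
  have "x $ j = 0" for j
  proof -
    have "gg X (0, axis (sw j) 1, 0, 0) = 0" using H by blast
    hence "x \<bullet> tau (axis (sw j) 1) = 0" by (simp add: X gg_def)
    hence "tau x \<bullet> axis (sw j) 1 = 0" by (simp add: tau_skew)
    thus ?thesis by (simp add: inner_axis tau_def)
  qed
  moreover have "y $ j = 0" for j
  proof -
    have "gg X (axis (sw j) 1, 0, 0, 0) = 0" using H by blast
    hence "axis (sw j) 1 \<bullet> tau y = 0" by (simp add: X gg_def)
    thus ?thesis by (simp add: inner_axis' tau_def)
  qed
  moreover have "z = 0"
  proof -
    have "gg X (0, 0, 0, axis 3 1) = 0" using H by blast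
    thus ?thesis by (simp add: X gg_def axis_def)
  qed
  moreover have "w $ 3 = 0"
  proof -
    have "gg X (0, 0, 1, 0) = 0" using H by blast
    thus ?thesis by (simp add: X gg_def)
  qed
  moreover have "w $ 1 = 0"
  proof -
    have "gg X (0, 0, 0, axis 2 1) = 0" using H by blast
    thus ?thesis by (simp add: X gg_def axis_def)
  qed
  moreover have "w $ 2 = 0"
  proof -
    have "gg X (0, 0, 0, axis 1 1) = 0" using H by blast
    thus ?thesis by (simp add: X gg_def axis_def)
  qed
  ultimately show "X = 0" by (simp add: X vec_eq_iff forall_3 zero_prod_def)
qed


lemma hph: "hyperparahermitian (gg::'n::finite hlie \<Rightarrow> _) J1 J2 J3"
  unfolding hyperparahermitian_def
proof (intro conjI allI metric_gg)
  fix X Y :: "'n hlie"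
  obtain x y z w where X: "X = (x, y, z, w)" by (cases X) auto
  obtain x' y' z' w' where Y: "Y = (x', y', z', w')" by (cases Y) auto
  have s1: "y \<bullet> tau x' = - (x' \<bullet> tau y)" "y' \<bullet> tau x = - (x \<bullet> tau y')"
    by (rule tau_swap)+
  show "gg (J1 X) (J1 Y) = - gg X Y"
    by (simp add: X Y defs algebra_simps)
  show "gg (J2 X) (J2 Y) = - gg X Y"
    using s1 by (simp add: X Y defs algebra_simps)
  show "- gg (J3 X) (J3 Y) = - gg X Y"
    using s1 by (simp add: X Y defs algebra_simps)
qed

lemma conn: "bilinear (nab::'n::finite hlie \<Rightarrow> _) \<and>
        (\<forall>(X::'n hlie) Y Z. gg (nab X Y) Z + gg Y (nab X Z) = 0) \<and>
        (\<forall>(X::'n hlie) Y. nab X (J1 Y) = J1 (nab X Y)) \<and>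
        (\<forall>(X::'n hlie) Y. nab X (J2 Y) = J2 (nab X Y)) \<and>
        (\<forall>(X::'n hlie) Y. nab X (J3 Y) = J3 (nab X Y)) \<and>
        (\<forall>(X::'n hlie) Y Z. gg (torsion nab X Y) Z = - gg (torsion nab X Z) Y)"
proof (intro conjI allI)
  show "bilinear (nab::'n::finite hlie \<Rightarrow> _)"
    unfolding bilinear_def
  proof (intro conjI allI)
    show "linear (nab x)" for x :: "'n hlie"
      by (cases x) (auto intro!: linearI simp: defs split_paired_all algebra_simps)
    show "linear (\<lambda>x. nab x y)" for y :: "'n hlie"
      by (cases y) (auto intro!: linearI simp: defs split_paired_all algebra_simps)
  qed
next
  fix X Y U :: "'n hlie"
  obtain x y z w where X: "X = (x, y, z, w)" by (cases X) auto
  obtain x' y' z' w' where Y: "Y = (x', y', z', w')" by (cases Y) auto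
  obtain x'' y'' z'' w'' where U: "U = (x'', y'', z'', w'')" by (cases U) auto
  show "gg (nab X Y) U + gg Y (nab X U) = 0"
    by (simp add: X Y U defs algebra_simps inner_commute)
  show "nab X (J1 Y) = J1 (nab X Y)"
    by (simp add: X Y defs vec_eq_iff)
  show "nab X (J2 Y) = J2 (nab X Y)"
    by (simp add: X Y defs vec_eq_iff)
  show "nab X (J3 Y) = J3 (nab X Y)"
    by (simp add: X Y defs vec_eq_iff)
  show "gg (torsion nab X Y) U = - gg (torsion nab X U) Y"
    by (simp add: X Y U defs torsion_def algebra_simps inner_commute inner_diff_left inner_diff_right)
qed

theorem mainTheorem7:
  shows "\<exists>(J1 :: 'n::finite hlie \<Rightarrow> 'n hlie) J2 J3 g. HPKT J1 J2 J3 g"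
  unfolding HPKT_def using hpc hph conn by blast

end
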